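(* Let $X$ be a $T_1$ topological space and regard $X\subseteq\beta_\circ^F X$ via $x\mapsto\mathcal{U}_x=\{Z\in Z[C_c(X)_F]: x\in Z\}$. Then every maximal ideal $M$ of $C_c(X)_F$ is of the form $M^p=\{f\in C_c(X)_F: p\in \mathrm{Cl}_{\beta_\circ^F X}Z(f)\}$ for some $p\in\beta_\circ^F X$ (namely $p=Z[M]$).
   Context: $C_c(X)_F$ denotes the set of all functions $f:X\to\mathbb{R}$ whose range is countable and whose set of points of discontinuity is finite. $Z(f)=\{x:f(x)=0\}$, $Z[M]=\{Z(f):f\in M\}$, $Z[C_c(X)_F]=\{Z(f):f\in C_c(X)_F\}$. A $(\mathcal{Z}_c)_F$-filter on $X$ is a nonempty family $\mathcal{F}\subseteq Z[C_c(X)_F]$ with $\emptyset\notin\mathcal{F}$, closed under finite intersections and upward closed within $Z[C_c(X)_F]$; a $(\mathcal{Z}_c)_F$-ultrafilter is a maximal one. $\beta_\circ^F X$ is the set of all $(\mathcal{Z}_c)_F$-ultrafilters on $X$ with the topology having as base for closed sets the sets $\overline{Z}=\{\mathcal{U}: Z\in\mathcal{U}\}$, $Z\in Z[C_c(X)_F]$. For $Z\subseteq X$ (identified with a subset of $\beta_\circ^F X$), $\mathrm{Cl}_{\beta_\circ^F X}Z$ is its closure there. *)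

theory Defs
  imports "HOL-Analysis.Analysis"
begin

definition cont_at :: "'a topology \<Rightarrow> ('a \<Rightarrow> real) \<Rightarrow> 'a \<Rightarrow> bool" where
  "cont_at X f x \<longleftrightarrow> (\<forall>V. open V \<and> f x \<in> V \<longrightarrow>
      (\<exists>U. openin X U \<and> x \<in> U \<and> f ` U \<subseteq> V))"

definition CcF :: "'a topology \<Rightarrow> ('a \<Rightarrow> real) set" where
  "CcF X = {f. (\<forall>x. x \<notin> topspace X \<longrightarrow> f x = 0)
              \<and> countable (f ` topspace X)
              \<and> finite {x \<in> topspace X. \<not> cont_at X f x}}"

definition CcF_ideal :: "'a topology \<Rightarrow> ('a \<Rightarrow> real) set \<Rightarrow> bool" where
  "CcF_ideal X I \<longleftrightarrow> I \<subseteq> CcF X \<and> (\<lambda>x. 0) \<in> I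
     \<and> (\<forall>f\<in>I. \<forall>g\<in>I. (\<lambda>x. f x - g x) \<in> I)
     \<and> (\<forall>f\<in>CcF X. \<forall>g\<in>I. (\<lambda>x. f x * g x) \<in> I)"

definition CcF_maximal_ideal :: "'a topology \<Rightarrow> ('a \<Rightarrow> real) set \<Rightarrow> bool" where
  "CcF_maximal_ideal X M \<longleftrightarrow> CcF_ideal X M \<and> M \<noteq> CcF X
     \<and> (\<forall>I. CcF_ideal X I \<and> M \<subseteq> I \<longrightarrow> I = M \<or> I = CcF X)"

definition Zs :: "'a topology \<Rightarrow> ('a \<Rightarrow> real) \<Rightarrow> 'a set" where
  "Zs X f = {x \<in> topspace X. f x = 0}"

definition ZF :: "'a topology \<Rightarrow> 'a set set" where
  "ZF X = Zs X ` CcF X"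

definition ZcF_filter :: "'a topology \<Rightarrow> 'a set set \<Rightarrow> bool" where
  "ZcF_filter X \<F> \<longleftrightarrow> \<F> \<noteq> {} \<and> \<F> \<subseteq> ZF X \<and> {} \<notin> \<F>
     \<and> (\<forall>A\<in>\<F>. \<forall>B\<in>\<F>. A \<inter> B \<in> \<F>)
     \<and> (\<forall>A\<in>\<F>. \<forall>B\<in>ZF X. A \<subseteq> B \<longrightarrow> B \<in> \<F>)"

definition ZcF_ultrafilter :: "'a topology \<Rightarrow> 'a set set \<Rightarrow> bool" where
  "ZcF_ultrafilter X \<U> \<longleftrightarrow> ZcF_filter X \<U>
     \<and> (\<forall>\<F>. ZcF_filter X \<F> \<and> \<U> \<subseteq> \<F> \<longrightarrow> \<F> = \<U>)"

definition betaF :: "'a topology \<Rightarrow> 'a set set set" where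
  "betaF X = {\<U>. ZcF_ultrafilter X \<U>}"

definition basic_closed :: "'a topology \<Rightarrow> 'a set \<Rightarrow> 'a set set set" where
  "basic_closed X Z = {\<U> \<in> betaF X. Z \<in> \<U>}"

text \<open>Topology on beta_o^F X whose base for closed sets is the family of basic closed sets:
  generated by their complements (within beta_o^F X).\<close>
definition betaF_top :: "'a topology \<Rightarrow> 'a set set topology" where
  "betaF_top X = subtopology
      (topology_generated_by {- basic_closed X Z | Z. Z \<in> ZF X}) (betaF X)"

definition point_ultra :: "'a topology \<Rightarrow> 'a \<Rightarrow> 'a set set" where
  "point_ultra X x = {Z \<in> ZF X. x \<in> Z}"

definition Mp :: "'a topology \<Rightarrow> 'a set set \<Rightarrow> ('a \<Rightarrow> real) set" where
  "Mp X p = {f \<in> CcF X. p \<in> (betaF_top X) closure_of (point_ultra X ` Zs X f)}"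

end

theory Submission
  imports Defs
begin

lemma cont_at_comp2:
  assumes f: "cont_at X f x" and g: "cont_at X g x" and h: "isCont h (f x, g x)"
  shows "cont_at X (\<lambda>y. h (f y, g y)) x"
  unfolding cont_at_def
proof (intro allI impI)
  fix V :: "real set" assume V: "open V \<and> h (f x, g x) \<in> V"
  then obtain S where S: "open S" "(f x, g x) \<in> S" "\<forall>z\<in>S. h z \<in> V"
    using h unfolding continuous_at_open by blast
  then obtain A B where AB: "open A" "open B" "(f x, g x) \<in> A \<times> B" "A \<times> B \<subseteq> S"
    by (metis open_prod_elim)
  obtain U1 where U1: "openin X U1" "x \<in> U1" "f ` U1 \<subseteq> A"
    using f AB unfolding cont_at_def by auto
  obtain U2 where U2: "openin X U2" "x \<in> U2" "g ` U2 \<subseteq> B"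
    using g AB unfolding cont_at_def by auto
  show "\<exists>U. openin X U \<and> x \<in> U \<and> (\<lambda>y. h (f y, g y)) ` U \<subseteq> V"
    apply (rule exI[of _ "U1 \<inter> U2"])
    using U1 U2 AB S by (auto intro: openin_Int)
qed

lemma cont_at_const:
  assumes "openin X U" "x \<in> U" "\<forall>z\<in>U. f z = f x"
  shows "cont_at X f x"
  unfolding cont_at_def
proof (intro allI impI)
  fix V :: "real set" assume V: "open V \<and> f x \<in> V"
  have "f ` U \<subseteq> V" unfolding image_subset_iff using assms(3) V by metis
  then show "\<exists>U. openin X U \<and> x \<in> U \<and> f ` U \<subseteq> V" using assms(1,2) by blast
qed

lemma CcF_diff:
  assumes "f \<in> CcF X" "g \<in> CcF X" shows "(\<lambda>x. f x - g x) \<in> CcF X"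
proof -
  let ?T = "topspace X"
  have "(\<lambda>x. f x - g x) ` ?T \<subseteq> (\<lambda>(a,b). a - b) ` (f ` ?T \<times> g ` ?T)" by auto
  moreover have "countable ((\<lambda>(a,b). a - b) ` (f ` ?T \<times> g ` ?T))"
    using assms unfolding CcF_def by auto
  ultimately have c: "countable ((\<lambda>x. f x - g x) ` ?T)" by (rule countable_subset)
  have "{x \<in> ?T. \<not> cont_at X (\<lambda>x. f x - g x) x} \<subseteq> {x \<in> ?T. \<not> cont_at X f x} \<union> {x \<in> ?T. \<not> cont_at X g x}"
  proof
    fix x assume "x \<in> {x \<in> ?T. \<not> cont_at X (\<lambda>x. f x - g x) x}"
    then have x: "x \<in> ?T" "\<not> cont_at X (\<lambda>x. f x - g x) x" by auto
    have "isCont (\<lambda>p::real\<times>real. fst p - snd p) (f x, g x)" by (intro continuous_intros)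
    then have "\<not> cont_at X f x \<or> \<not> cont_at X g x" using x cont_at_comp2[of X f x g "\<lambda>p. fst p - snd p"] by auto
    then show "x \<in> {x \<in> ?T. \<not> cont_at X f x} \<union> {x \<in> ?T. \<not> cont_at X g x}" using x by auto
  qed
  then show ?thesis using assms c unfolding CcF_def by (auto intro: finite_subset)
qed

lemma CcF_mult:
  assumes "f \<in> CcF X" "g \<in> CcF X" shows "(\<lambda>x. f x * g x) \<in> CcF X"
proof -
  let ?T = "topspace X"
  have "(\<lambda>x. f x * g x) ` ?T \<subseteq> (\<lambda>(a,b). a * b) ` (f ` ?T \<times> g ` ?T)" by auto
  moreover have "countable ((\<lambda>(a,b). a * b) ` (f ` ?T \<times> g ` ?T))"
    using assms unfolding CcF_def by auto
  ultimately have c: "countable ((\<lambda>x. f x * g x) ` ?T)" by (rule countable_subset)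
  have "{x \<in> ?T. \<not> cont_at X (\<lambda>x. f x * g x) x} \<subseteq> {x \<in> ?T. \<not> cont_at X f x} \<union> {x \<in> ?T. \<not> cont_at X g x}"
  proof
    fix x assume "x \<in> {x \<in> ?T. \<not> cont_at X (\<lambda>x. f x * g x) x}"
    then have x: "x \<in> ?T" "\<not> cont_at X (\<lambda>x. f x * g x) x" by auto
    have "isCont (\<lambda>p::real\<times>real. fst p * snd p) (f x, g x)" by (intro continuous_intros)
    then have "\<not> cont_at X f x \<or> \<not> cont_at X g x" using x cont_at_comp2[of X f x g "\<lambda>p. fst p * snd p"] by auto
    then show "x \<in> {x \<in> ?T. \<not> cont_at X f x} \<union> {x \<in> ?T. \<not> cont_at X g x}" using x by auto
  qed
  then show ?thesis using assms c unfolding CcF_def by (auto intro: finite_subset)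
qed

lemma CcF_inverse:
  assumes "f \<in> CcF X" "Zs X f = {}" shows "(\<lambda>x. inverse (f x)) \<in> CcF X"
proof -
  let ?T = "topspace X"
  have "(\<lambda>x. inverse (f x)) ` ?T = inverse ` (f ` ?T)" by auto
  then have c: "countable ((\<lambda>x. inverse (f x)) ` ?T)" using assms unfolding CcF_def by auto
  have "{x \<in> ?T. \<not> cont_at X (\<lambda>x. inverse (f x)) x} \<subseteq> {x \<in> ?T. \<not> cont_at X f x}"
  proof
    fix x assume "x \<in> {x \<in> ?T. \<not> cont_at X (\<lambda>x. inverse (f x)) x}"
    then have x: "x \<in> ?T" "\<not> cont_at X (\<lambda>x. inverse (f x)) x" by auto
    then have "f x \<noteq> 0" using assms(2) unfolding Zs_def by auto
    then have "isCont (\<lambda>p::real\<times>real. inverse (fst p)) (f x, f x)" by (intro continuous_intros) auto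
    then have "\<not> cont_at X f x" using x cont_at_comp2[of X f x f "\<lambda>p. inverse (fst p)"] by auto
    then show "x \<in> {x \<in> ?T. \<not> cont_at X f x}" using x by auto
  qed
  then show ?thesis using assms c unfolding CcF_def by (auto intro: finite_subset)
qed

definition one :: "'a topology \<Rightarrow> 'a \<Rightarrow> real" where
  "one X = (\<lambda>x. if x \<in> topspace X then 1 else 0)"

lemma one_CcF: "one X \<in> CcF X"
proof -
  have "one X ` topspace X \<subseteq> {0,1}" unfolding one_def by auto
  then have c: "countable (one X ` topspace X)" by (rule countable_subset) auto
  have "cont_at X (one X) x" if "x \<in> topspace X" for x
    by (rule cont_at_const[of X "topspace X"]) (use that in \<open>auto simp: one_def\<close>)
  then have e: "{x \<in> topspace X. \<not> cont_at X (one X) x} = {}" by auto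
  show ?thesis unfolding CcF_def mem_Collect_eq e
    using c by (auto simp: one_def)
qed

lemma Zs_one: "Zs X (one X) = {}" unfolding Zs_def one_def by auto

lemma zero_CcF: "(\<lambda>x. 0) \<in> CcF X"
proof -
  have "(\<lambda>x::'a. 0::real) ` topspace X \<subseteq> {0}" by auto
  then have c: "countable ((\<lambda>x::'a. 0::real) ` topspace X)" by (rule countable_subset) auto
  have "cont_at X (\<lambda>x. 0) x" if "x \<in> topspace X" for x
    by (rule cont_at_const[of X "topspace X"]) (use that in auto)
  then have e: "{x \<in> topspace X. \<not> cont_at X (\<lambda>x. 0) x} = {}" by auto
  show ?thesis unfolding CcF_def mem_Collect_eq e using c by simp
qed

lemma Zs_zero: "Zs X (\<lambda>x. 0) = topspace X" unfolding Zs_def by auto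

lemma Zs_sq: "Zs X (\<lambda>x. f x * f x + g x * g x) = Zs X f \<inter> Zs X g"
  unfolding Zs_def by (auto simp: sum_squares_eq_zero_iff)

lemma Zs_sub: "Zs X f \<subseteq> topspace X" unfolding Zs_def by auto

lemma CcF_add: "f \<in> CcF X \<Longrightarrow> g \<in> CcF X \<Longrightarrow> (\<lambda>x. f x + g x) \<in> CcF X"
  using CcF_diff[of f X "\<lambda>x. 0 - g x"] CcF_diff[OF zero_CcF, of g X] by simp

lemma ZF_Int: "A \<in> ZF X \<Longrightarrow> B \<in> ZF X \<Longrightarrow> A \<inter> B \<in> ZF X"
  unfolding ZF_def
proof clarify
  fix f g assume "f \<in> CcF X" "g \<in> CcF X"
  then have "(\<lambda>x. f x * f x + g x * g x) \<in> CcF X" by (intro CcF_add CcF_mult)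
  then have "Zs X (\<lambda>x. f x * f x + g x * g x) \<in> Zs X ` CcF X" by (rule imageI)
  then show "Zs X f \<inter> Zs X g \<in> Zs X ` CcF X" by (simp only: Zs_sq)
qed

lemma ZF_empty: "{} \<in> ZF X" unfolding ZF_def
  by (rule image_eqI[where x="one X"]) (simp_all add: Zs_one one_CcF)
lemma ZF_top: "topspace X \<in> ZF X" unfolding ZF_def
  by (rule image_eqI[where x="\<lambda>x. 0"]) (simp_all add: Zs_zero zero_CcF)

lemma ZF_sub: "A \<in> ZF X \<Longrightarrow> A \<subseteq> topspace X" unfolding ZF_def by (auto simp: Zs_def)

lemma filter_top: "ZcF_filter X F \<Longrightarrow> topspace X \<in> F"
  unfolding ZcF_filter_def using ZF_top ZF_sub by blast

lemma betaF_filter: "q \<in> betaF X \<Longrightarrow> ZcF_filter X q"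
  unfolding betaF_def ZcF_ultrafilter_def by blast

lemma filter_Int: "ZcF_filter X q \<Longrightarrow> A \<in> q \<Longrightarrow> B \<in> q \<Longrightarrow> A \<inter> B \<in> q"
  unfolding ZcF_filter_def by blast

lemma filter_ne: "ZcF_filter X q \<Longrightarrow> {} \<notin> q"
  unfolding ZcF_filter_def by blast

lemma filter_ZF: "ZcF_filter X q \<Longrightarrow> A \<in> q \<Longrightarrow> A \<in> ZF X"
  unfolding ZcF_filter_def by auto

definition J :: "'a topology \<Rightarrow> 'a set set \<Rightarrow> ('a \<Rightarrow> real) set" where
  "J X F = {h \<in> CcF X. Zs X h \<in> F}"

lemma J_ideal: assumes "ZcF_filter X F" shows "CcF_ideal X (J X F)"
  unfolding CcF_ideal_def
proof (intro conjI ballI)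
  show "J X F \<subseteq> CcF X" unfolding J_def by auto
  show "(\<lambda>x. 0) \<in> J X F" unfolding J_def by (simp add: zero_CcF Zs_zero filter_top[OF assms])
next
  fix f g assume f: "f \<in> J X F" and g: "g \<in> J X F"
  have d: "(\<lambda>x. f x - g x) \<in> CcF X" using f g CcF_diff unfolding J_def by auto
  have "Zs X f \<inter> Zs X g \<in> F" using f g assms unfolding J_def ZcF_filter_def by auto
  moreover have "Zs X f \<inter> Zs X g \<subseteq> Zs X (\<lambda>x. f x - g x)" unfolding Zs_def by auto
  moreover have "Zs X (\<lambda>x. f x - g x) \<in> ZF X" using d unfolding ZF_def by auto
  ultimately show "(\<lambda>x. f x - g x) \<in> J X F" using d assms unfolding J_def ZcF_filter_def by blast
next
  fix f g assume f: "f \<in> CcF X" and g: "g \<in> J X F"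
  have d: "(\<lambda>x. f x * g x) \<in> CcF X" using f g CcF_mult unfolding J_def by auto
  have "Zs X g \<in> F" using g unfolding J_def by auto
  moreover have "Zs X g \<subseteq> Zs X (\<lambda>x. f x * g x)" unfolding Zs_def by auto
  moreover have "Zs X (\<lambda>x. f x * g x) \<in> ZF X" using d unfolding ZF_def by auto
  ultimately show "(\<lambda>x. f x * g x) \<in> J X F" using d assms unfolding J_def ZcF_filter_def by blast
qed

lemma J_proper: assumes "ZcF_filter X F" shows "J X F \<noteq> CcF X"
proof
  assume "J X F = CcF X"
  then have "one X \<in> J X F" using one_CcF by simp
  then have "{} \<in> F" unfolding J_def using Zs_one[of X] by simp
  then show False using assms unfolding ZcF_filter_def by simp
qed

lemma ultra_disjoint:
  assumes p: "ZcF_ultrafilter X p" and Z0: "Z0 \<in> ZF X" "Z0 \<notin> p"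
  shows "\<exists>Z\<in>p. Z \<inter> Z0 = {}"
proof (rule ccontr)
  assume H: "\<not> (\<exists>Z\<in>p. Z \<inter> Z0 = {})"
  have pf: "ZcF_filter X p" using p unfolding ZcF_ultrafilter_def by auto
  define F where "F = {B \<in> ZF X. \<exists>Z\<in>p. Z \<inter> Z0 \<subseteq> B}"
  have "ZcF_filter X F" unfolding ZcF_filter_def
  proof (intro conjI ballI impI)
    show "F \<noteq> {}" unfolding F_def using Z0 filter_top[OF pf] by blast
    show "F \<subseteq> ZF X" unfolding F_def by auto
    show "{} \<notin> F" unfolding F_def using H by auto
  next
    fix A B assume "A \<in> F" "B \<in> F"
    then obtain Z1 Z2 where "Z1 \<in> p" "Z2 \<in> p" "Z1 \<inter> Z0 \<subseteq> A" "Z2 \<inter> Z0 \<subseteq> B" "A \<in> ZF X" "B \<in> ZF X"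
      unfolding F_def by auto
    moreover have "Z1 \<inter> Z2 \<in> p" using pf \<open>Z1 \<in> p\<close> \<open>Z2 \<in> p\<close> unfolding ZcF_filter_def by auto
    ultimately show "A \<inter> B \<in> F" unfolding F_def using ZF_Int by blast
  next
    fix A B assume "A \<in> F" "B \<in> ZF X" "A \<subseteq> B"
    then show "B \<in> F" unfolding F_def by blast
  qed
  moreover have "p \<subseteq> F"
  proof
    fix Z assume Z: "Z \<in> p"
    then have "Z \<in> ZF X" using pf by (simp add: filter_ZF)
    then show "Z \<in> F" unfolding F_def using Z by blast
  qed
  ultimately have "F = p" using p unfolding ZcF_ultrafilter_def by blast
  moreover have "Z0 \<in> F" unfolding F_def using Z0 filter_top[OF pf] by blast
  ultimately show False using Z0 by auto
qed

lemma point_ultra_ultra: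
  assumes t1: "t1_space X" and x: "x \<in> topspace X"
  shows "point_ultra X x \<in> betaF X"
proof -
  let ?U = "point_ultra X x"
  have fil: "ZcF_filter X ?U" unfolding ZcF_filter_def point_ultra_def
    using ZF_top[of X] x ZF_Int by blast
  define g where "g = (\<lambda>y. if y \<in> topspace X \<and> y \<noteq> x then 1 else (0::real))"
  have op: "openin X (topspace X - {x})"
    using t1 x unfolding t1_space_closedin_singleton by (simp add: openin_diff)
  have "g ` topspace X \<subseteq> {0,1}" unfolding g_def by auto
  then have "countable (g ` topspace X)" by (rule countable_subset) auto
  moreover have "{y \<in> topspace X. \<not> cont_at X g y} \<subseteq> {x}"
  proof clarify
    fix y assume "y \<in> topspace X" "\<not> cont_at X g y"
    moreover have "y \<noteq> x \<Longrightarrow> cont_at X g y"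
      by (rule cont_at_const[OF op]) (use \<open>y \<in> topspace X\<close> in \<open>auto simp: g_def\<close>)
    ultimately show "y = x" by auto
  qed
  ultimately have gC: "g \<in> CcF X" unfolding CcF_def by (auto simp: g_def intro: finite_subset)
  have Zg: "Zs X g = {x}" unfolding Zs_def g_def using x by auto
  have sing: "{x} \<in> ?U" unfolding point_ultra_def ZF_def using gC Zg by (metis image_eqI insertI1 mem_Collect_eq)
  have "\<F> = ?U" if F: "ZcF_filter X \<F>" "?U \<subseteq> \<F>" for \<F>
  proof
    show "\<F> \<subseteq> ?U"
    proof
      fix Z assume Z: "Z \<in> \<F>"
      have xF: "{x} \<in> \<F>" using F(2) sing by blast
      have "\<forall>A\<in>\<F>. \<forall>B\<in>\<F>. A \<inter> B \<in> \<F>" using F(1) unfolding ZcF_filter_def by blast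
      then have "{x} \<inter> Z \<in> \<F>" using xF Z by blast
      then have "x \<in> Z" using F unfolding ZcF_filter_def by (metis Int_insert_left_if0 inf_bot_left)
      then show "Z \<in> ?U" using F Z unfolding ZcF_filter_def point_ultra_def by auto
    qed
  qed (use F in auto)
  then show ?thesis using fil unfolding betaF_def ZcF_ultrafilter_def by auto
qed

lemma open_nbhd:
  assumes "generate_topology_on {- basic_closed X Z | Z. Z \<in> ZF X} V"
  shows "\<And>p. p \<in> betaF X \<Longrightarrow> p \<in> V \<Longrightarrow> \<exists>Z\<in>p. basic_closed X Z \<subseteq> V"
  using assms
proof induction
  case Empty then show ?case by auto
next
  case (Int a b)
  then obtain Z1 Z2 where "Z1 \<in> p" "Z2 \<in> p" "basic_closed X Z1 \<subseteq> a" "basic_closed X Z2 \<subseteq> b" by blast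
  moreover have "Z1 \<inter> Z2 \<in> p" using Int.prems \<open>Z1 \<in> p\<close> \<open>Z2 \<in> p\<close>
    by (meson betaF_filter filter_Int)
  moreover have "basic_closed X (Z1 \<inter> Z2) \<subseteq> basic_closed X Z1 \<inter> basic_closed X Z2"
  proof
    fix q assume "q \<in> basic_closed X (Z1 \<inter> Z2)"
    then have q: "q \<in> betaF X" "Z1 \<inter> Z2 \<in> q" unfolding basic_closed_def by auto
    have qf: "ZcF_filter X q" using q(1) by (rule betaF_filter)
    have up: "\<forall>A\<in>q. \<forall>B\<in>ZF X. A \<subseteq> B \<longrightarrow> B \<in> q" using qf unfolding ZcF_filter_def by blast
    have "Z1 \<in> ZF X" "Z2 \<in> ZF X" using Int.prems \<open>Z1 \<in> p\<close> \<open>Z2 \<in> p\<close> by (meson betaF_filter filter_ZF)+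
    then have "Z1 \<in> q" "Z2 \<in> q" using up q by blast+
    then show "q \<in> basic_closed X Z1 \<inter> basic_closed X Z2" using q unfolding basic_closed_def by auto
  qed
  ultimately show ?case by blast
next
  case (UN K)
  then obtain k where "k \<in> K" "p \<in> k" by auto
  then obtain Z where "Z \<in> p" "basic_closed X Z \<subseteq> k" using UN by blast
  then show ?case using \<open>k \<in> K\<close> by blast
next
  case (Basis s)
  then obtain Z0 where Z0: "Z0 \<in> ZF X" "s = - basic_closed X Z0" by auto
  then have "Z0 \<notin> p" using Basis.prems unfolding basic_closed_def by auto
  then obtain Z where Z: "Z \<in> p" "Z \<inter> Z0 = {}"
    using ultra_disjoint Basis.prems Z0 unfolding betaF_def by blast
  have "basic_closed X Z \<subseteq> s"
  proof
    fix q assume "q \<in> basic_closed X Z"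
    then have q: "q \<in> betaF X" "Z \<in> q" unfolding basic_closed_def by auto
    have "Z0 \<notin> q"
    proof
      assume "Z0 \<in> q"
      then have "Z \<inter> Z0 \<in> q" using q by (meson betaF_filter filter_Int)
      then show False using Z q by (metis betaF_filter filter_ne)
    qed
    then show "q \<in> s" using Z0 unfolding basic_closed_def by auto
  qed
  then show ?case using Z by blast
qed

lemma closure_iff:
  assumes t1: "t1_space X" and p: "p \<in> betaF X" and f: "f \<in> CcF X"
  shows "p \<in> betaF_top X closure_of (point_ultra X ` Zs X f) \<longleftrightarrow> Zs X f \<in> p"
proof -
  let ?S = "{- basic_closed X Z | Z. Z \<in> ZF X}"
  have be: "basic_closed X {} = {}"
    unfolding basic_closed_def using betaF_filter filter_ne by blast
  have "UNIV \<in> ?S" using ZF_empty[of X] be by (intro CollectI exI[of _ "{}"]) auto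
  then have top: "topspace (betaF_top X) = betaF X"
    unfolding betaF_top_def topspace_subtopology topology_generated_by_topspace by blast
  have ZfZF: "Zs X f \<in> ZF X" using f unfolding ZF_def by auto
  show ?thesis
  proof
    assume H: "p \<in> betaF_top X closure_of (point_ultra X ` Zs X f)"
    show "Zs X f \<in> p"
    proof (rule ccontr)
      assume n: "Zs X f \<notin> p"
      let ?W = "- basic_closed X (Zs X f) \<inter> betaF X"
      have H': "\<exists>y. y \<in> point_ultra X ` Zs X f \<and> y \<in> T" if "p \<in> T" "openin (betaF_top X) T" for T
        using H that unfolding in_closure_of by metis
      have o: "openin (betaF_top X) ?W"
        unfolding betaF_top_def openin_subtopology
        using ZfZF by (intro exI[of _ "- basic_closed X (Zs X f)"] conjI topology_generated_by_Basis) auto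
      have pW: "p \<in> ?W" using n p unfolding basic_closed_def by simp
      obtain y where y: "y \<in> point_ultra X ` Zs X f" "y \<in> ?W"
        using H'[OF pW o] by blast
      then obtain x where x: "x \<in> Zs X f" "y = point_ultra X x" by blast
      then have "Zs X f \<in> y" unfolding point_ultra_def using ZfZF by simp
      moreover have "Zs X f \<notin> y" using y(2) unfolding basic_closed_def by simp
      ultimately show False by simp
    qed
  next
    assume H: "Zs X f \<in> p"
    show "p \<in> betaF_top X closure_of (point_ultra X ` Zs X f)"
      unfolding in_closure_of top
    proof (intro conjI allI impI p)
      fix W assume W: "p \<in> W \<and> openin (betaF_top X) W"
      then obtain V where V: "generate_topology_on ?S V" "W = V \<inter> betaF X"
        unfolding betaF_top_def openin_subtopology openin_topology_generated_by_iff by auto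
      obtain Z where Z: "Z \<in> p" "basic_closed X Z \<subseteq> V" using open_nbhd[OF V(1) p] W V by auto
      have pf: "ZcF_filter X p" using p by (rule betaF_filter)
      have "Z \<inter> Zs X f \<in> p" using pf Z(1) H by (rule filter_Int)
      then have "Z \<inter> Zs X f \<noteq> {}" using filter_ne[OF pf] by metis
      then obtain x where x: "x \<in> Z" "x \<in> Zs X f" by blast
      have xT: "x \<in> topspace X" using x unfolding Zs_def by auto
      have pu: "point_ultra X x \<in> betaF X" using point_ultra_ultra[OF t1 xT] .
      have "Z \<in> ZF X" using pf Z(1) by (rule filter_ZF)
      then have "point_ultra X x \<in> basic_closed X Z"
        using pu x unfolding basic_closed_def point_ultra_def by auto
      then show "\<exists>y. y \<in> point_ultra X ` Zs X f \<and> y \<in> W" using Z V pu x by blast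
    qed
  qed
qed

lemma ideal_mult: "CcF_ideal X I \<Longrightarrow> f \<in> CcF X \<Longrightarrow> g \<in> I \<Longrightarrow> (\<lambda>x. f x * g x) \<in> I"
  unfolding CcF_ideal_def by blast
lemma ideal_diff: "CcF_ideal X I \<Longrightarrow> f \<in> I \<Longrightarrow> g \<in> I \<Longrightarrow> (\<lambda>x. f x - g x) \<in> I"
  unfolding CcF_ideal_def by blast
lemma ideal_sub: "CcF_ideal X I \<Longrightarrow> f \<in> I \<Longrightarrow> f \<in> CcF X"
  unfolding CcF_ideal_def by blast
lemma ideal_zero: "CcF_ideal X I \<Longrightarrow> (\<lambda>x. 0) \<in> I"
  unfolding CcF_ideal_def by blast

lemma unit_not_in:
  assumes M: "CcF_maximal_ideal X M" and f: "f \<in> M" shows "Zs X f \<noteq> {}"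
proof
  assume Z: "Zs X f = {}"
  have I: "CcF_ideal X M" "M \<noteq> CcF X" using M unfolding CcF_maximal_ideal_def by auto
  have fC: "f \<in> CcF X" using I(1) f by (rule ideal_sub)
  have "(\<lambda>x. inverse (f x) * f x) \<in> M"
    using I(1) CcF_inverse[OF fC Z] f by (rule ideal_mult)
  moreover have "(\<lambda>x. inverse (f x) * f x) = one X"
  proof
    fix x show "inverse (f x) * f x = one X x"
    proof (cases "x \<in> topspace X")
      case True then have "f x \<noteq> 0" using Z unfolding Zs_def by auto
      then show ?thesis using True unfolding one_def by simp
    next
      case False then show ?thesis using fC unfolding one_def CcF_def by simp
    qed
  qed
  ultimately have oM: "one X \<in> M" by simp
  have "CcF X \<subseteq> M"
  proof
    fix g assume g: "g \<in> CcF X"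
    have "(\<lambda>x. g x * one X x) \<in> M" using I(1) g oM by (rule ideal_mult)
    moreover have "(\<lambda>x. g x * one X x) = g"
    proof
      fix x show "g x * one X x = g x"
        using g unfolding one_def CcF_def by auto
    qed
    ultimately show "g \<in> M" by simp
  qed
  then show False using I ideal_sub by blast
qed

theorem theorem4p4:
  fixes X :: "'a topology" and M :: "('a \<Rightarrow> real) set"
  assumes "t1_space X"
    and "CcF_maximal_ideal X M"
  shows "(\<exists>p \<in> betaF X. M = Mp X p) \<and> Zs X ` M \<in> betaF X \<and> M = Mp X (Zs X ` M)"
proof -
  have I: "CcF_ideal X M" "M \<noteq> CcF X"
    and mx: "\<And>I. CcF_ideal X I \<Longrightarrow> M \<subseteq> I \<Longrightarrow> I = M \<or> I = CcF X"
    using assms(2) unfolding CcF_maximal_ideal_def by auto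
  have MC: "M \<subseteq> CcF X" using I(1) ideal_sub by blast
  have zM: "(\<lambda>x. 0) \<in> M" using I(1) by (rule ideal_zero)
  have diffM: "\<And>f g. f \<in> M \<Longrightarrow> g \<in> M \<Longrightarrow> (\<lambda>x. f x - g x) \<in> M"
    using I(1) by (rule ideal_diff)
  have multM: "\<And>f g. f \<in> CcF X \<Longrightarrow> g \<in> M \<Longrightarrow> (\<lambda>x. f x * g x) \<in> M"
    using I(1) by (rule ideal_mult)
  define F0 where "F0 = {B \<in> ZF X. \<exists>f\<in>M. Zs X f \<subseteq> B}"
  have F0: "ZcF_filter X F0" unfolding ZcF_filter_def
  proof (intro conjI ballI impI)
    show "F0 \<noteq> {}" unfolding F0_def using zM ZF_top[of X] Zs_zero[of X] by blast
    show "F0 \<subseteq> ZF X" unfolding F0_def by auto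
    show "{} \<notin> F0" unfolding F0_def using unit_not_in[OF assms(2)] by blast
  next
    fix A B assume "A \<in> F0" "B \<in> F0"
    then obtain f g where fg: "f \<in> M" "g \<in> M" "Zs X f \<subseteq> A" "Zs X g \<subseteq> B" "A \<in> ZF X" "B \<in> ZF X"
      unfolding F0_def by auto
    have fC: "f \<in> CcF X" and gC: "g \<in> CcF X" using fg MC by auto
    have "(\<lambda>x. f x * f x) \<in> M" "(\<lambda>x. g x * g x) \<in> M" using multM fg fC gC by auto
    then have s1: "(\<lambda>x. f x * f x - (0 - g x * g x)) \<in> M" using diffM zM by blast
    have eqs: "(\<lambda>x. f x * f x + g x * g x) = (\<lambda>x. f x * f x - (0 - g x * g x))" by simp
    have s2: "(\<lambda>x. f x * f x + g x * g x) \<in> M" unfolding eqs by (rule s1)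
    have s3: "Zs X (\<lambda>x. f x * f x + g x * g x) \<subseteq> A \<inter> B" unfolding Zs_sq using fg by blast
    have s4: "A \<inter> B \<in> ZF X" using fg by (intro ZF_Int)
    show "A \<inter> B \<in> F0" unfolding F0_def using s2 s3 s4 by blast
  next
    fix A B assume "A \<in> F0" "B \<in> ZF X" "A \<subseteq> B"
    then show "B \<in> F0" unfolding F0_def by blast
  qed
  have MJ: "M \<subseteq> J X F0" unfolding J_def F0_def ZF_def using MC by auto
  have JM: "J X F0 = M" using mx[OF J_ideal[OF F0] MJ] J_proper[OF F0] by auto
  have KEY: "\<And>g. g \<in> CcF X \<Longrightarrow> Zs X g \<in> F0 \<Longrightarrow> g \<in> M"
    using JM unfolding J_def by auto
  have ZM: "Zs X ` M = F0"
  proof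
    show "Zs X ` M \<subseteq> F0" unfolding F0_def ZF_def using MC by auto
    show "F0 \<subseteq> Zs X ` M"
    proof
      fix B assume B: "B \<in> F0"
      then obtain g where "g \<in> CcF X" "B = Zs X g" unfolding F0_def ZF_def by auto
      then show "B \<in> Zs X ` M" using KEY B by auto
    qed
  qed
  have ultra: "ZcF_ultrafilter X (Zs X ` M)" unfolding ZcF_ultrafilter_def
  proof (intro conjI allI impI)
    show "ZcF_filter X (Zs X ` M)" using F0 ZM by simp
  next
    fix F assume F: "ZcF_filter X F \<and> Zs X ` M \<subseteq> F"
    have F1: "ZcF_filter X F" and F2: "Zs X ` M \<subseteq> F" using F by blast+
    have MJF: "M \<subseteq> J X F"
    proof
      fix f assume f: "f \<in> M"
      then have "f \<in> CcF X" using MC by blast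
      moreover have "Zs X f \<in> F" using f F2 by blast
      ultimately show "f \<in> J X F" unfolding J_def by blast
    qed
    have "J X F = M \<or> J X F = CcF X" by (rule mx[OF J_ideal[OF F1] MJF])
    then have JF: "J X F = M" using J_proper[OF F1] by blast
    show "F = Zs X ` M"
    proof
      show "F \<subseteq> Zs X ` M"
      proof
        fix B assume B: "B \<in> F"
        then have "B \<in> ZF X" using F1 by (intro filter_ZF)
        then obtain g where "g \<in> CcF X" "B = Zs X g" unfolding ZF_def by auto
        then have "g \<in> J X F" unfolding J_def using B by auto
        then show "B \<in> Zs X ` M" using JF \<open>B = Zs X g\<close> by auto
      qed
    qed (use F2 in blast)
  qed
  then have pB: "Zs X ` M \<in> betaF X" unfolding betaF_def by auto
  have eq: "M = Mp X (Zs X ` M)"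
  proof
    show "M \<subseteq> Mp X (Zs X ` M)"
    proof
      fix f assume "f \<in> M"
      then show "f \<in> Mp X (Zs X ` M)" unfolding Mp_def
        using closure_iff[OF assms(1) pB] MC by auto
    qed
    show "Mp X (Zs X ` M) \<subseteq> M"
    proof
      fix f assume "f \<in> Mp X (Zs X ` M)"
      then have f: "f \<in> CcF X" "Zs X f \<in> Zs X ` M" unfolding Mp_def
        using closure_iff[OF assms(1) pB] by auto
      then show "f \<in> M" using KEY ZM by auto
    qed
  qed
  show ?thesis using pB eq by blast
qed

end
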